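(* If $p>2$ is a prime, then $P(p,3)=\mathrm{lcm}(O(p),6)$.
   Context: $O(p)$ is the multiplicative order of $2$ modulo $p$. For positive integers $m,n$, let $\mathbf{Z}_m$ be the integers modulo $m$ and $T:\mathbf{Z}_m^n\to\mathbf{Z}_m^n$, $T(a_0,\dots,a_{n-1})=(a_0+a_1,a_1+a_2,\dots,a_{n-1}+a_0)$. For $\mathbf{a}\in\mathbf{Z}_m^n$ the cycle length of $(T^k\mathbf{a})_{k\ge0}$ is the smallest positive integer $P$ such that there is $N$ with $T^{k+P}\mathbf{a}=T^k\mathbf{a}$ for all $k\ge N$. $P(m,n)$ denotes the maximum of these cycle lengths over all $\mathbf{a}\in\mathbf{Z}_m^n$. *)

theory Defs
  imports "HOL-Number_Theory.Number_Theory"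
begin

definition zvecs :: "nat \<Rightarrow> nat \<Rightarrow> nat list set" where
  "zvecs m n = {a. length a = n \<and> (\<forall>x\<in>set a. x < m)}"

definition ducci :: "nat \<Rightarrow> nat list \<Rightarrow> nat list" where
  "ducci m a = map (\<lambda>i. (a ! i + a ! ((i + 1) mod length a)) mod m) [0..<length a]"

definition cycle_len :: "nat \<Rightarrow> nat list \<Rightarrow> nat" where
  "cycle_len m a = (LEAST P. 0 < P \<and>
     (\<exists>N. \<forall>k\<ge>N. (ducci m ^^ (k + P)) a = (ducci m ^^ k) a))"

definition ducci_P :: "nat \<Rightarrow> nat \<Rightarrow> nat" where
  "ducci_P m n = Max (cycle_len m ` zvecs m n)"

end

theory Submission imports Defs
begin


fun cf :: "nat \<Rightarrow> nat \<times> nat \<times> nat" where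
  "cf 0 = (1,0,0)"
| "cf (Suc k) = (case cf k of (a,b,c) \<Rightarrow> (a+b, b+c, a+c))"

definition "ca k = fst (cf k)"
definition "cb k = fst (snd (cf k))"
definition "cc k = snd (snd (cf k))"

lemma cf_Suc: "ca (Suc k) = ca k + cb k" "cb (Suc k) = cb k + cc k" "cc (Suc k) = ca k + cc k"
  by (auto simp: ca_def cb_def cc_def split: prod.splits)

lemma cf_0: "ca 0 = 1" "cb 0 = 0" "cc 0 = 0" by (auto simp: ca_def cb_def cc_def)

lemma cf_sum: "ca k + cb k + cc k = 2^k"
  by (induction k) (auto simp: cf_Suc cf_0)

lemma cf_6: "int (ca (k+6)) - int (cb (k+6)) = int (ca k) - int (cb k)"
  "int (cb (k+6)) - int (cc (k+6)) = int (cb k) - int (cc k)"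
  by (simp_all add: numeral_eq_Suc cf_Suc)

lemma cf_per: "int (ca (6*q+r)) - int (cb (6*q+r)) = int (ca r) - int (cb r) \<and>
   int (cb (6*q+r)) - int (cc (6*q+r)) = int (cb r) - int (cc r)"
proof (induction q)
  case 0 then show ?case by simp
next
  case (Suc q)
  have e: "6 * Suc q + r = (6*q+r) + 6" by simp
  show ?case unfolding e cf_6 using Suc by simp
qed

lemma cf_diff: "int (ca k) - int (cb k) = int (ca (k mod 6)) - int (cb (k mod 6))"
   "int (cb k) - int (cc k) = int (cb (k mod 6)) - int (cc (k mod 6))"
  using cf_per[of "k div 6" "k mod 6"] by simp_all

lemma ducci3: "ducci p [x,y,z] = [(x+y) mod p, (y+z) mod p, (z+x) mod p]"
  by (simp add: ducci_def upt_rec)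

lemma ducci_iter: assumes "x < p" "y < p" "z < p"
  shows "(ducci p ^^ k) [x,y,z] = [(ca k * x + cc k * y + cb k * z) mod p,
     (cb k * x + ca k * y + cc k * z) mod p, (cc k * x + cb k * y + ca k * z) mod p]"
proof (induction k)
  case 0 then show ?case using assms by (simp add: cf_0)
next
  case (Suc k)
  show ?case using Suc by (simp add: ducci3 cf_Suc mod_add_eq algebra_simps)
qed


lemma cf_small: "ca 1 = 1" "cb 1 = 0" "cc 1 = 1"
  "ca 2 = 1" "cb 2 = 1" "cc 2 = 2"
  "ca 3 = 2" "cb 3 = 3" "cc 3 = 3"
  "ca 4 = 5" "cb 4 = 6" "cc 4 = 5"
  "ca 5 = 11" "cb 5 = 11" "cc 5 = 10"
  by (simp_all add: numeral_eq_Suc cf_Suc cf_0)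

lemma mod6_0: assumes "P mod 6 = 0" shows "ca P = cb P + 1" "cb P = cc P"
  using cf_diff[of P] assms by (simp_all add: cf_0)

lemma back6: assumes p: "p > 2" and h: "ca P mod p = 1" "cb P mod p = 0" "cc P mod p = 0"
  shows "P mod 6 = 0"
proof -
  have r: "P mod 6 < 6" by simp
  have d1: "int (ca P) - int (cb P) = int (ca (P mod 6)) - int (cb (P mod 6))"
   and d2: "int (cb P) - int (cc P) = int (cb (P mod 6)) - int (cc (P mod 6))" using cf_diff by auto
  have p1: "1 mod p = 1" "2 mod p = 2" "Suc (Suc 0) mod p = Suc (Suc 0)" using p by auto
  { assume "P mod 6 = 1"
    then have "cc P = cb P + 1" using d2 cf_small by simp
    then have "cc P mod p = (cb P mod p + 1) mod p" by (simp add: mod_Suc_eq)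
    then have False using h p1 by simp }
  moreover
  { assume "P mod 6 = 2"
    then have "cb P = ca P" using d1 cf_small by simp
    then have False using h by simp }
  moreover
  { assume "P mod 6 = 3"
    then have "cb P = ca P + 1" using d1 cf_small by simp
    then have "cb P mod p = (ca P mod p + 1) mod p" by (simp add: mod_Suc_eq)
    then have False using h p1 by simp }
  moreover
  { assume "P mod 6 = 4"
    then have "cb P = ca P + 1" using d1 cf_small by simp
    then have "cb P mod p = (ca P mod p + 1) mod p" by (simp add: mod_Suc_eq)
    then have False using h p1 by simp }
  moreover
  { assume "P mod 6 = 5"
    then have "cb P = ca P" using d1 cf_small by simp
    then have False using h by simp }
  moreover have "P mod 6 \<in> {0,1,2,3,4,5}" using r by auto
  ultimately show ?thesis by blast
qed

lemma forward: assumes p: "prime p" "p > 2" and L: "ord p 2 dvd L" "6 dvd L"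
  shows "ca L mod p = 1" "cb L mod p = 0" "cc L mod p = 0"
proof -
  have m: "L mod 6 = 0" using L by simp
  have e1: "ca L = cb L + 1" and e2: "cb L = cc L" using mod6_0[OF m] by auto
  have s: "3 * cb L + 1 = 2 ^ L" using cf_sum[of L] e1 e2 by simp
  have "[2 ^ L = 1] (mod p)" using L(1) by (simp add: ord_divides')
  then have "[3 * cb L + 1 = 1] (mod p)" using s by simp
  then have "[3 * cb L = 0] (mod p)" using cong_add_rcancel_nat[of "3 * cb L" 1 0 p] by simp
  then have pd: "p dvd 3 * cb L" by (simp add: cong_0_iff)
  obtain q where q: "L = 6 * q" using L(2) by auto
  have "[2 ^ L = (1::nat)] (mod 9)"
  proof -
    have "[(64::nat) ^ q = 1 ^ q] (mod 9)" by (rule cong_pow) (simp add: cong_def)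
    moreover have "(2::nat) ^ L = 64 ^ q" using q by (simp add: power_mult)
    ultimately show ?thesis by simp
  qed
  then have "[3 * cb L + 1 = 1] (mod 9)" using s by simp
  then have "[3 * cb L = 0] (mod 9)" using cong_add_rcancel_nat[of "3 * cb L" 1 0 9] by simp
  then have "9 dvd 3 * cb L" by (simp add: cong_0_iff)
  then have d3: "3 dvd cb L" by presburger
  have "p dvd cb L"
  proof (cases "p = 3")
    case True then show ?thesis using d3 by simp
  next
    case False
    have "\<not> p dvd 3"
    proof
      assume "p dvd 3"
      then have "p = 1 \<or> p = 3" using prime_nat_iff[of 3] by auto
      then show False using p False by auto
    qed
    then show ?thesis using pd p(1) prime_dvd_mult_iff by blast
  qed
  then show "ca L mod p = 1" "cb L mod p = 0" "cc L mod p = 0"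
    using e1 e2 p by (auto simp: mod_Suc dvd_eq_mod_eq_0)
qed


lemma zvecs3: "a \<in> zvecs p 3 \<Longrightarrow> \<exists>x y z. a = [x,y,z] \<and> x < p \<and> y < p \<and> z < p"
proof -
  assume "a \<in> zvecs p 3"
  then have l: "length a = 3" and b: "\<forall>x\<in>set a. x < p" by (auto simp: zvecs_def)
  from l obtain x y z where "a = [x,y,z]"
    by (metis (no_types, lifting) length_0_conv length_Suc_conv numeral_3_eq_3)
  then show ?thesis using b by auto
qed

lemma finite_zvecs: "finite (zvecs m n)"
proof -
  have "zvecs m n \<subseteq> {xs. set xs \<subseteq> {0..<m} \<and> length xs = n}" by (auto simp: zvecs_def)
  moreover have "finite {xs. set xs \<subseteq> {0..<m} \<and> length xs = n}"
    by (rule finite_lists_length_eq) simp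
  ultimately show ?thesis by (rule finite_subset)
qed

lemma mod3s: "((a::nat) + b + c) mod p = ((a mod p) + (b mod p) + (c mod p)) mod p"
proof -
  have "(a+b+c) mod p = ((a+b) mod p + c mod p) mod p" by (simp add: mod_add_eq)
  also have "\<dots> = ((a mod p + b mod p) mod p + c mod p) mod p" by (simp add: mod_add_eq)
  also have "\<dots> = (a mod p + b mod p + c mod p) mod p" by (rule mod_add_left_eq)
  finally show ?thesis .
qed

lemma mod3: "((a::nat) * x + b * y + c * z) mod p = ((a mod p) * x + (b mod p) * y + (c mod p) * z) mod p"
proof -
  have "(a * x + b * y + c * z) mod p = ((a*x) mod p + (b*y) mod p + (c*z) mod p) mod p"
    by (rule mod3s)
  also have "\<dots> = ((a mod p * x) mod p + (b mod p * y) mod p + (c mod p * z) mod p) mod p"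
    by (simp add: mod_mult_left_eq)
  also have "\<dots> = ((a mod p) * x + (b mod p) * y + (c mod p) * z) mod p"
    by (rule mod3s[symmetric])
  finally show ?thesis .
qed

theorem proposition7p3:
  fixes p :: nat
  assumes "prime p" and "p > 2"
  shows "ducci_P p 3 = lcm (ord p 2) 6"
proof -
  define L where "L = lcm (ord p 2) 6"
  have nd: "\<not> p dvd 2" using assms(2) by (auto dest: dvd_imp_le)
  have cop: "coprime p 2" by (rule prime_imp_coprime[OF assms(1) nd])
  have o0: "ord p 2 \<noteq> 0" using cop ord_eq_0 by blast
  have Lpos: "0 < L" using o0 by (simp add: L_def lcm_pos_nat)
  have Ld: "ord p 2 dvd L" "6 dvd L" by (simp_all add: L_def)
  note F = forward[OF assms Ld]
  have idL: "(ducci p ^^ L) a = a" if az: "a \<in> zvecs p 3" for a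
  proof -
    obtain x y z where a: "a = [x,y,z]" "x < p" "y < p" "z < p" using zvecs3[OF az] by blast
    have m: "(ca L * x + cc L * y + cb L * z) mod p = x"
         "(cb L * x + ca L * y + cc L * z) mod p = y"
         "(cc L * x + cb L * y + ca L * z) mod p = z"
      using F a(2-4) by (simp_all add: mod3)
    show ?thesis using ducci_iter[OF a(2-4), of L] m a(1) by simp
  qed
  have idNL: "(ducci p ^^ (N * L)) a = a" if "a \<in> zvecs p 3" for a N
  proof (induction N)
    case 0 then show ?case by simp
  next
    case (Suc N)
    have "(ducci p ^^ (Suc N * L)) a = (ducci p ^^ L) ((ducci p ^^ (N * L)) a)"
      by (simp add: funpow_add)
    then show ?case using idL[OF that] Suc by simp
  qed
  have le: "cycle_len p a \<le> L" if "a \<in> zvecs p 3" for a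
    unfolding cycle_len_def
  proof (rule Least_le)
    show "0 < L \<and> (\<exists>N. \<forall>k\<ge>N. (ducci p ^^ (k + L)) a = (ducci p ^^ k) a)"
      using Lpos idL[OF that] by (auto simp: funpow_add)
  qed
  define e where "e = [1::nat,0,0]"
  have ez: "e \<in> zvecs p 3" using assms by (auto simp: e_def zvecs_def)
  have ge: "L \<le> cycle_len p e"
  proof -
    define P where "P = cycle_len p e"
    have ex: "\<exists>P. 0 < P \<and> (\<exists>N. \<forall>k\<ge>N. (ducci p ^^ (k + P)) e = (ducci p ^^ k) e)"
      using Lpos idL[OF ez] by (auto simp: funpow_add)
    have "0 < P \<and> (\<exists>N. \<forall>k\<ge>N. (ducci p ^^ (k + P)) e = (ducci p ^^ k) e)"
      unfolding P_def cycle_len_def by (rule LeastI_ex[OF ex])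
    then obtain N where P0: "0 < P" and N: "\<forall>k\<ge>N. (ducci p ^^ (k + P)) e = (ducci p ^^ k) e"
      by blast
    have NL: "N \<le> N * L" using Lpos by simp
    have "(ducci p ^^ (N * L + P)) e = (ducci p ^^ P) ((ducci p ^^ (N*L)) e)"
      by (simp add: funpow_add add.commute)
    then have "(ducci p ^^ P) e = e" using N NL idNL[OF ez, of N] by simp
    moreover have "(ducci p ^^ P) e = [ca P mod p, cb P mod p, cc P mod p]"
      using ducci_iter[of 1 p 0 0 P] assms by (simp add: e_def)
    ultimately have h: "ca P mod p = 1" "cb P mod p = 0" "cc P mod p = 0" by (auto simp: e_def)
    have m6: "P mod 6 = 0" using back6[OF assms(2) h] .
    have "(2::nat) ^ P mod p = (ca P + cb P + cc P) mod p" by (simp only: cf_sum)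
    also have "\<dots> = (ca P mod p + cb P mod p + cc P mod p) mod p" by (rule mod3s)
    also have "\<dots> = 1 mod p" by (simp only: h add_0_right)
    finally have "[2 ^ P = 1] (mod p)" unfolding cong_def .
    then have "ord p 2 dvd P" by (rule ord_divides[THEN iffD1])
    moreover have "6 dvd P" using m6 by (simp add: dvd_eq_mod_eq_0)
    ultimately have "L dvd P" unfolding L_def by (rule lcm_least)
    then show ?thesis using P0 P_def by (simp add: dvd_imp_le)
  qed
  have "Max (cycle_len p ` zvecs p 3) = L"
  proof (rule Max_eqI)
    show "finite (cycle_len p ` zvecs p 3)" using finite_zvecs by simp
    show "\<And>y. y \<in> cycle_len p ` zvecs p 3 \<Longrightarrow> y \<le> L" using le by auto
    show "L \<in> cycle_len p ` zvecs p 3" using le[OF ez] ge ez by force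
  qed
  then show ?thesis by (simp add: ducci_P_def L_def)
qed

end
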